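(* Let $n,m$ be positive integers. If both $n$ and $m$ are even, then $\chi'_{m\Sigma}(K_{n,m})=4$ if $n=m=2$, $\chi'_{m\Sigma}(K_{n,m})=3$ if $n=m\ge 4$, and $\chi'_{m\Sigma}(K_{n,m})=2$ if $n\ne m$. If at least one of $n,m$ is odd and $n,m\ge 2$, then $\chi'_{m\Sigma}(K_{n,m})=5$ if $n=m=3$, $\chi'_{m\Sigma}(K_{n,m})=4$ if $n=m=5$, and $\chi'_{m\Sigma}(K_{n,m})=3$ otherwise.
   Context: A $k$-edge-coloring of $G$ is any map $c:E(G)\to\{1,\dots,k\}$ (adjacent edges may share colors). It induces $\sigma_c(v)=\sum_{u\in N(v)}c(vu)$. The coloring is neighbor sum distinguishing (NSD) if $\sigma_c(u)\ne\sigma_c(v)$ for every edge $uv$. It is majority if every vertex $v$ is incident to at most $d(v)/2$ edges of each single color. $\chi'_{m\Sigma}(G)$ denotes the least $k$ such that $G$ has a $k$-edge-coloring that is both majority and NSD. *)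

theory Defs
  imports Main
begin

text \<open>A finite simple graph is given by a vertex set V and a symmetric irreflexive
edge relation E (only edges between vertices of V matter). An edge colouring is
represented by a symmetric function c on pairs of adjacent vertices.\<close>

definition nbrs :: "'a set \<Rightarrow> ('a \<Rightarrow> 'a \<Rightarrow> bool) \<Rightarrow> 'a \<Rightarrow> 'a set" where
  "nbrs V E v = {u \<in> V. E v u}"

definition deg :: "'a set \<Rightarrow> ('a \<Rightarrow> 'a \<Rightarrow> bool) \<Rightarrow> 'a \<Rightarrow> nat" where
  "deg V E v = card (nbrs V E v)"

definition is_k_edge_coloring ::
  "'a set \<Rightarrow> ('a \<Rightarrow> 'a \<Rightarrow> bool) \<Rightarrow> nat \<Rightarrow> ('a \<Rightarrow> 'a \<Rightarrow> nat) \<Rightarrow> bool" where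
  "is_k_edge_coloring V E k c \<longleftrightarrow>
     (\<forall>u\<in>V. \<forall>v\<in>V. E u v \<longrightarrow> c u v \<in> {1..k} \<and> c u v = c v u)"

definition sigma_c :: "'a set \<Rightarrow> ('a \<Rightarrow> 'a \<Rightarrow> bool) \<Rightarrow> ('a \<Rightarrow> 'a \<Rightarrow> nat) \<Rightarrow> 'a \<Rightarrow> nat" where
  "sigma_c V E c v = (\<Sum>u\<in>nbrs V E v. c v u)"

definition is_nsd :: "'a set \<Rightarrow> ('a \<Rightarrow> 'a \<Rightarrow> bool) \<Rightarrow> ('a \<Rightarrow> 'a \<Rightarrow> nat) \<Rightarrow> bool" where
  "is_nsd V E c \<longleftrightarrow> (\<forall>u\<in>V. \<forall>v\<in>V. E u v \<longrightarrow> sigma_c V E c u \<noteq> sigma_c V E c v)"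

definition is_majority :: "'a set \<Rightarrow> ('a \<Rightarrow> 'a \<Rightarrow> bool) \<Rightarrow> ('a \<Rightarrow> 'a \<Rightarrow> nat) \<Rightarrow> bool" where
  "is_majority V E c \<longleftrightarrow>
     (\<forall>v\<in>V. \<forall>a. 2 * card {u \<in> nbrs V E v. c v u = a} \<le> deg V E v)"

definition chi_mSigma :: "'a set \<Rightarrow> ('a \<Rightarrow> 'a \<Rightarrow> bool) \<Rightarrow> nat" where
  "chi_mSigma V E = (LEAST k. \<exists>c. is_k_edge_coloring V E k c \<and> is_majority V E c \<and> is_nsd V E c)"

definition Knm_V :: "nat \<Rightarrow> nat \<Rightarrow> (nat + nat) set" where
  "Knm_V n m = Inl ` {..<n} \<union> Inr ` {..<m}"

fun Knm_E :: "nat + nat \<Rightarrow> nat + nat \<Rightarrow> bool" where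
  "Knm_E (Inl _) (Inr _) = True"
| "Knm_E (Inr _) (Inl _) = True"
| "Knm_E _ _ = False"

end

theory Submission
  imports Defs
begin



definition good :: "nat \<Rightarrow> nat \<Rightarrow> nat \<Rightarrow> (nat \<Rightarrow> nat \<Rightarrow> nat) \<Rightarrow> bool" where
 "good k n m M \<longleftrightarrow> (\<forall>i<n. \<forall>j<m. 1 \<le> M i j \<and> M i j \<le> k)
   \<and> (\<forall>i<n. \<forall>a. 2 * card {j. j < m \<and> M i j = a} \<le> m)
   \<and> (\<forall>j<m. \<forall>a. 2 * card {i. i < n \<and> M i j = a} \<le> n)
   \<and> (\<forall>i<n. \<forall>j<m. (\<Sum>j'<m. M i j') \<noteq> (\<Sum>i'<n. M i' j))"

lemma nbrs_Inl: "nbrs (Knm_V n m) Knm_E (Inl i) = Inr ` {..<m}"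
  unfolding nbrs_def Knm_V_def
  by auto

lemma nbrs_Inr: "nbrs (Knm_V n m) Knm_E (Inr j) = Inl ` {..<n}"
  unfolding nbrs_def Knm_V_def
  by auto

lemma memV: "v \<in> Knm_V n m \<longleftrightarrow> (\<exists>i<n. v = Inl i) \<or> (\<exists>j<m. v = Inr j)"
  unfolding Knm_V_def by auto

lemma card_filter_Inr: "card {u \<in> Inr ` {..<m}. P u} = card {j. j < m \<and> P (Inr j)}"
proof -
  have "{u \<in> Inr ` {..<m}. P u} = Inr ` {j. j < m \<and> P (Inr j)}" by auto
  then show ?thesis by (simp add: card_image)
qed

lemma card_filter_Inl: "card {u \<in> Inl ` {..<m}. P u} = card {j. j < m \<and> P (Inl j)}"
proof -
  have "{u \<in> Inl ` {..<m}. P u} = Inl ` {j. j < m \<and> P (Inl j)}" by auto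
  then show ?thesis by (simp add: card_image)
qed

lemma good_imp_P:
  assumes "good k n m M"
  shows "\<exists>c. is_k_edge_coloring (Knm_V n m) Knm_E k c \<and> is_majority (Knm_V n m) Knm_E c \<and> is_nsd (Knm_V n m) Knm_E c"
proof -
  define c where "c u v = (case (u, v) of (Inl i, Inr j) \<Rightarrow> M i j | (Inr j, Inl i) \<Rightarrow> M i j | _ \<Rightarrow> 0)" for u v
  have cL[simp]: "c (Inl i) (Inr j) = M i j" for i j by (simp add: c_def)
  have cR[simp]: "c (Inr j) (Inl i) = M i j" for i j by (simp add: c_def)
  have sL: "sigma_c (Knm_V n m) Knm_E c (Inl i) = (\<Sum>j<m. M i j)" for i
    unfolding sigma_c_def nbrs_Inl by (simp add: sum.reindex)
  have sR: "sigma_c (Knm_V n m) Knm_E c (Inr j) = (\<Sum>i<n. M i j)" for j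
    unfolding sigma_c_def nbrs_Inr by (simp add: sum.reindex)
  have g: "\<forall>i<n. \<forall>j<m. 1 \<le> M i j \<and> M i j \<le> k"
          "\<forall>i<n. \<forall>a. 2 * card {j. j < m \<and> M i j = a} \<le> m"
          "\<forall>j<m. \<forall>a. 2 * card {i. i < n \<and> M i j = a} \<le> n"
          "\<forall>i<n. \<forall>j<m. (\<Sum>j'<m. M i j') \<noteq> (\<Sum>i'<n. M i' j)"
    using assms unfolding good_def by auto
  have "is_k_edge_coloring (Knm_V n m) Knm_E k c"
    unfolding is_k_edge_coloring_def Knm_V_def using g(1) by auto
  moreover have "is_majority (Knm_V n m) Knm_E c"
    unfolding is_majority_def deg_def
  proof (intro ballI allI)
    fix v a assume "v \<in> Knm_V n m"
    then consider (L) i where "v = Inl i" "i < n" | (R) j where "v = Inr j" "j < m"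
      unfolding Knm_V_def by auto
    then show "2 * card {u \<in> nbrs (Knm_V n m) Knm_E v. c v u = a} \<le> card (nbrs (Knm_V n m) Knm_E v)"
    proof cases
      case L then show ?thesis using g(2)
        by (simp add: nbrs_Inl card_filter_Inr card_image)
    next
      case R then show ?thesis using g(3)
        by (simp add: nbrs_Inr card_filter_Inl card_image)
    qed
  qed
  moreover have "is_nsd (Knm_V n m) Knm_E c"
    unfolding is_nsd_def
  proof (intro ballI impI)
    fix u v assume "u \<in> Knm_V n m" "v \<in> Knm_V n m" "Knm_E u v"
    then show "sigma_c (Knm_V n m) Knm_E c u \<noteq> sigma_c (Knm_V n m) Knm_E c v"
      unfolding memV using g(4)
      by (auto simp: sL sR) (metis (no_types, lifting))
  qed
  ultimately show ?thesis by blast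
qed

lemma P_imp_good:
  assumes "is_k_edge_coloring (Knm_V n m) Knm_E k c" "is_majority (Knm_V n m) Knm_E c" "is_nsd (Knm_V n m) Knm_E c"
  shows "good k n m (\<lambda>i j. c (Inl i) (Inr j))"
proof -
  have col: "c (Inl i) (Inr j) \<in> {1..k} \<and> c (Inl i) (Inr j) = c (Inr j) (Inl i)" if "i < n" "j < m" for i j
    using assms(1) that unfolding is_k_edge_coloring_def Knm_V_def by auto
  have sL: "sigma_c (Knm_V n m) Knm_E c (Inl i) = (\<Sum>j<m. c (Inl i) (Inr j))" for i
    unfolding sigma_c_def nbrs_Inl by (simp add: sum.reindex)
  have sR: "sigma_c (Knm_V n m) Knm_E c (Inr j) = (\<Sum>i<n. c (Inl i) (Inr j))" if "j < m" for j
    unfolding sigma_c_def nbrs_Inr using col that by (simp add: sum.reindex)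
  have m1: "2 * card {j. j < m \<and> c (Inl i) (Inr j) = a} \<le> m" if "i < n" for i a
  proof -
    have "Inl i \<in> Knm_V n m" using that by (simp add: Knm_V_def)
    then show ?thesis using assms(2) unfolding is_majority_def deg_def
      by (auto simp: nbrs_Inl card_filter_Inr card_image)
  qed
  have m2: "2 * card {i. i < n \<and> c (Inl i) (Inr j) = a} \<le> n" if "j < m" for j a
  proof -
    have "Inr j \<in> Knm_V n m" using that by (simp add: Knm_V_def)
    then have "2 * card {i. i < n \<and> c (Inr j) (Inl i) = a} \<le> n" using assms(2) unfolding is_majority_def deg_def
      by (auto simp: nbrs_Inr card_filter_Inl card_image)
    moreover have "{i. i < n \<and> c (Inr j) (Inl i) = a} = {i. i < n \<and> c (Inl i) (Inr j) = a}"
      using col that by auto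
    ultimately show ?thesis by simp
  qed
  have ns: "(\<Sum>j'<m. c (Inl i) (Inr j')) \<noteq> (\<Sum>i'<n. c (Inl i') (Inr j))" if "i < n" "j < m" for i j
  proof -
    have "Inl i \<in> Knm_V n m" "Inr j \<in> Knm_V n m" using that by (auto simp: Knm_V_def)
    then show ?thesis using assms(3) that unfolding is_nsd_def
      by (metis Knm_E.simps(1) sL sR)
  qed
  have col1: "1 \<le> c (Inl i) (Inr j) \<and> c (Inl i) (Inr j) \<le> k" if "i < n" "j < m" for i j
    using col[OF that] by simp
  show ?thesis unfolding good_def using col1 m1 m2 ns by blast
qed

lemma good_mono: "good k n m M \<Longrightarrow> k \<le> k' \<Longrightarrow> good k' n m M"
  unfolding good_def by (meson order_trans)

lemma chi_eq:
  assumes "\<exists>M. good k n m M" and "\<And>M. \<not> good (k - 1) n m M" and "k > 0"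
  shows "chi_mSigma (Knm_V n m) Knm_E = k"
  unfolding chi_mSigma_def
proof (rule Least_equality)
  show "\<exists>c. is_k_edge_coloring (Knm_V n m) Knm_E k c \<and> is_majority (Knm_V n m) Knm_E c \<and> is_nsd (Knm_V n m) Knm_E c"
    using assms(1) good_imp_P by blast
next
  fix y assume "\<exists>c. is_k_edge_coloring (Knm_V n m) Knm_E y c \<and> is_majority (Knm_V n m) Knm_E c \<and> is_nsd (Knm_V n m) Knm_E c"
  then obtain c where "is_k_edge_coloring (Knm_V n m) Knm_E y c" "is_majority (Knm_V n m) Knm_E c" "is_nsd (Knm_V n m) Knm_E c" by blast
  then have gy: "good y n m (\<lambda>i j. c (Inl i) (Inr j))" by (rule P_imp_good)
  show "k \<le> y"
  proof (rule ccontr)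
    assume "\<not> k \<le> y"
    then have "y \<le> k - 1" by simp
    then show False using good_mono[OF gy] assms(2) by blast
  qed
qed

lemma good_transp: assumes "good k n m M" shows "good k m n (\<lambda>i j. M j i)"
  using assms unfolding good_def
  apply (elim conjE)
  apply (intro conjI)
  apply blast
  apply blast
  apply blast
  apply (intro allI impI)
  subgoal for i j
  proof -
    assume h: "\<forall>i<n. \<forall>j<m. (\<Sum>j'<m. M i j') \<noteq> (\<Sum>i'<n. M i' j)" "i < m" "j < n"
    have "(\<Sum>j'<m. M j j') \<noteq> (\<Sum>i'<n. M i' i)" using h by blast
    then show ?thesis by simp
  qed
  done




lemma card_sum: "card {j. j < (m::nat) \<and> P j} = (\<Sum>j<m. if P j then 1 else 0)"
proof (induction m)
  case 0 then show ?case by simp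
next
  case (Suc m)
  show ?case
  proof (cases "P m")
    case True
    then have "{j. j < Suc m \<and> P j} = insert m {j. j < m \<and> P j}" by auto
    then show ?thesis using Suc True by simp
  next
    case False
    then have "{j. j < Suc m \<and> P j} = {j. j < m \<and> P j}" using less_Suc_eq by auto
    then show ?thesis using Suc False by simp
  qed
qed

lemma sum_split: "(\<Sum>j<(a::nat)+b. f j) = (\<Sum>j<a. f j) + (\<Sum>j<b. f (a+j))"
  by (induction b) (simp_all add: add.assoc)

lemma sum_point:
  assumes "x < (L::nat)"
  shows "(\<Sum>j<L. if j = x then d else g j) + g x = (\<Sum>j<L. g j) + (d::nat)"
proof -
  have x: "x \<in> {..<L}" using assms by simp
  have "(\<Sum>j<L. if j = x then d else g j) = d + (\<Sum>j\<in>{..<L}-{x}. if j = x then d else g j)"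
    using sum.remove[OF finite_lessThan x, of "\<lambda>j. if j = x then d else g j"] by simp
  also have "(\<Sum>j\<in>{..<L}-{x}. if j = x then d else g j) = (\<Sum>j\<in>{..<L}-{x}. g j)"
    by (rule sum.cong) auto
  finally show ?thesis using sum.remove[OF finite_lessThan x, of g] by simp
qed

lemma line_count:
  assumes "\<forall>j<(L::nat). 1 \<le> f j \<and> f j \<le> k"
  shows "(\<Sum>j<L. f j) = (\<Sum>a\<in>{1..k}. a * card {j. j < L \<and> f j = a})"
    and "L = (\<Sum>a\<in>{1..k}. card {j. j < L \<and> f j = a})"
proof -
  have e1: "(\<Sum>a\<in>{1..k}. if a = f j then a else 0) = f j" if "j < L" for j
    using assms that by (subst sum.delta) auto
  have e2: "(\<Sum>a\<in>{1..k}. if a = f j then 1 else 0) = (1::nat)" if "j < L" for j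
    using assms that by (subst sum.delta) auto
  have e3: "(\<Sum>j<L. if a = f j then a else 0) = a * card {j. j < L \<and> f j = a}" for a
    unfolding card_sum sum_distrib_left by (rule sum.cong) auto
  have e4: "(\<Sum>j<L. if a = f j then 1 else 0) = card {j. j < L \<and> f j = a}" for a
    unfolding card_sum by (rule sum.cong) auto
  have "(\<Sum>j<L. f j) = (\<Sum>j<L. \<Sum>a\<in>{1..k}. if a = f j then a else 0)"
    by (rule sum.cong[OF refl], rule e1[symmetric], simp)
  also have "\<dots> = (\<Sum>a\<in>{1..k}. \<Sum>j<L. if a = f j then a else 0)" by (rule sum.swap)
  also have "\<dots> = (\<Sum>a\<in>{1..k}. a * card {j. j < L \<and> f j = a})"
    by (simp only: e3)
  finally show "(\<Sum>j<L. f j) = (\<Sum>a\<in>{1..k}. a * card {j. j < L \<and> f j = a})" .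
  have "L = (\<Sum>j<L. (1::nat))" by simp
  also have "\<dots> = (\<Sum>j<L. \<Sum>a\<in>{1..k}. if a = f j then 1 else 0)"
    by (rule sum.cong[OF refl], rule e2[symmetric], simp)
  also have "\<dots> = (\<Sum>a\<in>{1..k}. \<Sum>j<L. if a = f j then 1 else 0)" by (rule sum.swap)
  also have "\<dots> = (\<Sum>a\<in>{1..k}. card {j. j < L \<and> f j = a})"
    by (simp only: e4)
  finally show "L = (\<Sum>a\<in>{1..k}. card {j. j < L \<and> f j = a})" .
qed

lemma double_count:
  "(\<Sum>i<(n::nat). card {j. j < (m::nat) \<and> M i j = a}) = (\<Sum>j<m. card {i. i < n \<and> M i j = a})"
  by (simp only: card_sum) (rule sum.swap)




lemma sum12: "(\<Sum>a\<in>{1..2::nat}. f a) = f 1 + (f 2 :: nat)"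
  by (simp add: numeral_2_eq_2)

lemma no_good1: assumes "good 1 n m M" "n > 0" "m > 0" shows False
proof -
  have "\<forall>j<m. M 0 j = 1" using assms(1,2) unfolding good_def by force
  then have "{j. j < m \<and> M 0 j = 1} = {..<m}" by auto
  moreover have "2 * card {j. j < m \<and> M 0 j = 1} \<le> m" using assms(1,2) unfolding good_def by blast
  ultimately show False using assms(3) by simp
qed

lemma row2: assumes "good k n m M" "k \<le> 2" "i < n"
  shows "2 * (\<Sum>j<m. M i j) = 3 * m"
proof -
  have g: "good 2 n m M" using good_mono[OF assms(1,2)] .
  have r: "\<forall>j<m. 1 \<le> M i j \<and> M i j \<le> 2" using g assms(3) unfolding good_def by blast
  have b1: "2 * card {j. j < m \<and> M i j = 1} \<le> m" and b2: "2 * card {j. j < m \<and> M i j = 2} \<le> m"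
    using g assms(3) unfolding good_def by blast+
  have s: "(\<Sum>j<m. M i j) = card {j. j < m \<and> M i j = 1} + 2 * card {j. j < m \<and> M i j = 2}"
    using line_count(1)[OF r] by (simp only: sum12 mult_1)
  have t: "m = card {j. j < m \<and> M i j = 1} + card {j. j < m \<and> M i j = 2}"
    using line_count(2)[OF r] by (simp only: sum12)
  show ?thesis using s t b1 b2 by linarith
qed

lemma even_row2: assumes "good k n m M" "k \<le> 2" "i < n"
  shows "even m"
proof -
  have "2 * (\<Sum>j<m. M i j) = 3 * m" by (rule row2[OF assms])
  then show ?thesis by presburger
qed

lemma no_good2_odd: assumes "good k n m M" "k \<le> 2" "n > 0" "m > 0" "odd n \<or> odd m" shows False
proof -
  have "even m" using even_row2[OF assms(1,2,3)] .
  moreover have "even n" using even_row2[OF good_transp[OF assms(1)] assms(2,4)] .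
  ultimately show False using assms(5) by simp
qed

lemma no_good2_eq: assumes "good k n n M" "k \<le> 2" "n > 0" shows False
proof -
  have a: "2 * (\<Sum>j<n. M 0 j) = 3 * n" using row2[OF assms(1,2,3)] .
  have b: "2 * (\<Sum>i<n. M i 0) = 3 * n" using row2[OF good_transp[OF assms(1)] assms(2,3)] by simp
  have "(\<Sum>j<n. M 0 j) \<noteq> (\<Sum>i<n. M i 0)" using assms(1,3) unfolding good_def by blast
  then show False using a b by simp
qed

lemma vec:
  fixes c :: "nat \<Rightarrow> nat"
  assumes "finite A" "t \<in> A" "b \<ge> 1" "\<forall>a\<in>A. c a \<le> b" "c t < b" "(\<Sum>a\<in>A. c a) + 1 = card A * b"
  shows "\<forall>a\<in>A. c a = (if a = t then b - 1 else b)"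
proof -
  define g where "g a = (if a = t then b - 1 else b)" for a
  have "(\<Sum>a\<in>A. g a) = g t + (\<Sum>a\<in>A - {t}. g a)" using sum.remove[OF assms(1,2)] by simp
  also have "(\<Sum>a\<in>A - {t}. g a) = (\<Sum>a\<in>A - {t}. b)" by (rule sum.cong) (auto simp: g_def)
  also have "\<dots> = (card A - 1) * b" using assms(1,2) by simp
  finally have sg: "(\<Sum>a\<in>A. g a) = (b - 1) + (card A - 1) * b" by (simp add: g_def)
  have cA: "card A \<ge> 1" using assms(1,2) card_0_eq by fastforce
  then obtain k' where k': "card A = Suc k'" by (cases "card A") auto
  have sg2: "(\<Sum>a\<in>A. g a) + 1 = card A * b" using sg k' assms(3) by simp
  have le: "c a \<le> g a" if "a \<in> A" for a using assms(4,5) that by (auto simp: g_def)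
  have eq: "(\<Sum>a\<in>A. c a) = (\<Sum>a\<in>A. g a)" using sg2 assms(6) by simp
  show ?thesis using sum_mono_inv[OF eq le _ assms(1)] by (simp add: g_def)
qed

lemma defic:
  assumes G: "good k n n M" and n0: "n > 0" and nk: "n + 1 = k * b" and nb: "n \<le> 2 * b + 1" and b1: "b \<ge> 1"
  shows False
proof -
  define c where "c i a = card {j. j < n \<and> M i j = a}" for i a
  define d where "d j a = card {i. i < n \<and> M i j = a}" for j a
  have ent: "\<forall>i<n. \<forall>j<n. 1 \<le> M i j \<and> M i j \<le> k" using G unfolding good_def by blast
  have cb: "c i a \<le> b" if "i < n" for i a
  proof -
    have "2 * c i a \<le> n" using G that unfolding good_def c_def by blast
    then show ?thesis using nb by linarith
  qed
  have db: "d j a \<le> b" if "j < n" for j a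
  proof -
    have "2 * d j a \<le> n" using G that unfolding good_def d_def by blast
    then show ?thesis using nb by linarith
  qed
  have ctot: "(\<Sum>a\<in>{1..k}. c i a) = n" if "i < n" for i
    using line_count(2)[of n "M i" k] ent that unfolding c_def by simp
  have dtot: "(\<Sum>a\<in>{1..k}. d j a) = n" if "j < n" for j
    using line_count(2)[of n "\<lambda>i. M i j" k] ent that unfolding d_def by simp
  have csum: "(\<Sum>j<n. M i j) = (\<Sum>a\<in>{1..k}. a * c i a)" if "i < n" for i
    using line_count(1)[of n "M i" k] ent that unfolding c_def by simp
  have dsum: "(\<Sum>i<n. M i j) = (\<Sum>a\<in>{1..k}. a * d j a)" if "j < n" for j
    using line_count(1)[of n "\<lambda>i. M i j" k] ent that unfolding d_def by simp
  have "\<exists>t\<in>{1..k}. c 0 t < b"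
  proof (rule ccontr)
    assume "\<not> ?thesis"
    then have "\<forall>t\<in>{1..k}. c 0 t = b" using cb[OF n0] by (meson le_antisym not_le)
    then have "(\<Sum>a\<in>{1..k}. c 0 a) = k * b" by simp
    then show False using ctot[OF n0] nk by simp
  qed
  then obtain t where t: "t \<in> {1..k}" "c 0 t < b" by blast
  have c0: "\<forall>a\<in>{1..k}. c 0 a = (if a = t then b - 1 else b)"
    by (rule vec) (use t b1 cb[OF n0] ctot[OF n0] nk in auto)
  have "(\<Sum>i<n. c i t) < (\<Sum>i<n. b)"
    by (rule sum_strict_mono_ex1) (use cb t n0 in auto)
  then have "(\<Sum>j<n. d j t) < (\<Sum>j<n. b)" using double_count[where n=n and m=n and M=M and a=t] unfolding c_def d_def by simp
  then obtain j where j: "j < n" "d j t < b"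
    by (meson lessThan_iff not_le sum_mono)
  have dj: "\<forall>a\<in>{1..k}. d j a = (if a = t then b - 1 else b)"
    by (rule vec) (use t b1 db[OF j(1)] dtot[OF j(1)] nk j in auto)
  have "(\<Sum>a\<in>{1..k}. a * c 0 a) = (\<Sum>a\<in>{1..k}. a * d j a)"
    by (rule sum.cong) (use c0 dj in auto)
  then have "(\<Sum>j'<n. M 0 j') = (\<Sum>i<n. M i j)"
    using csum[OF n0] dsum[OF j(1)] by simp
  moreover have "(\<Sum>j'<n. M 0 j') \<noteq> (\<Sum>i<n. M i j)" using G n0 j(1) unfolding good_def by blast
  ultimately show False by simp
qed




lemma per_shift: "(\<forall>j. g (j + P) = g j) \<Longrightarrow> g (P * q + j) = g (j::nat)"
proof (induction q)
  case 0 then show ?case by simp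
next
  case (Suc q)
  have "g (P * Suc q + j) = g ((P * q + j) + P)" by (simp add: algebra_simps)
  also have "\<dots> = g (P * q + j)" using Suc.prems by blast
  finally show ?case using Suc by simp
qed

lemma sum_periodic:
  assumes "\<forall>j. g (j + P) = g j"
  shows "(\<Sum>j<P * q + r. g j) = q * (\<Sum>j<P. g j) + (\<Sum>j<r. (g j :: nat))"
proof -
  have a: "(\<Sum>j<P * q. g j) = q * (\<Sum>j<P. g j)"
  proof (induction q)
    case 0 then show ?case by simp
  next
    case (Suc q)
    have "(\<Sum>j<P * Suc q. g j) = (\<Sum>j<P * q + P. g j)" by (simp add: algebra_simps)
    also have "\<dots> = (\<Sum>j<P * q. g j) + (\<Sum>j<P. g (P * q + j))" by (rule sum_split)
    also have "(\<Sum>j<P. g (P * q + j)) = (\<Sum>j<P. g j)" using per_shift[OF assms] by simp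
    finally show ?case using Suc by simp
  qed
  have "(\<Sum>j<P * q + r. g j) = (\<Sum>j<P * q. g j) + (\<Sum>j<r. g (P * q + j))" by (rule sum_split)
  also have "(\<Sum>j<r. g (P * q + j)) = (\<Sum>j<r. g j)" using per_shift[OF assms] by simp
  finally show ?thesis using a by simp
qed

lemma sum_pt:
  assumes "x < (p::nat)"
  shows "(\<Sum>j<p. if j = x then d else c) = (p - 1) * c + (d::nat)"
proof -
  have "(\<Sum>j<p. if j = x then d else c) + c = (\<Sum>j<p. c) + d" using sum_point[OF assms, of d "\<lambda>_. c"] by simp
  moreover have "(\<Sum>j<p. c) = (p - 1) * c + c" using assms by (cases p) auto
  ultimately show ?thesis by simp
qed

lemma pair_sum: "(\<Sum>i<2 * (h::nat). f i) = (\<Sum>t<h. f (2 * t) + f (2 * t + 1))"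
  by (induction h) (simp_all add: numeral_2_eq_2 algebra_simps)

lemma line3: "(\<Sum>j<2 * (p::nat) + 1. f j) = (\<Sum>j<p. f j) + f p + (\<Sum>j<p. f (Suc p + j))"
proof -
  have "(\<Sum>j<2 * p + 1. f j) = (\<Sum>j<Suc p + p. f j)" by (simp add: mult_2)
  also have "\<dots> = (\<Sum>j<Suc p. f j) + (\<Sum>j<p. f (Suc p + j))" by (rule sum_split)
  finally show ?thesis by simp
qed

lemma line2: "(\<Sum>j<2 * (p::nat). f j) = (\<Sum>j<p. f j) + (\<Sum>j<p. f (p + j))"
proof -
  have "(\<Sum>j<2 * p. f j) = (\<Sum>j<p + p. f j)" by (simp add: mult_2)
  also have "\<dots> = (\<Sum>j<p. f j) + (\<Sum>j<p. f (p + j))" by (rule sum_split)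
  finally show ?thesis .
qed




lemma mod3_cases: "((s::nat) mod 3 = 0 \<and> (s+1) mod 3 = 1 \<and> (s+2) mod 3 = 2) \<or> (s mod 3 = 1 \<and> (s+1) mod 3 = 2 \<and> (s+2) mod 3 = 0) \<or> (s mod 3 = 2 \<and> (s+1) mod 3 = 0 \<and> (s+2) mod 3 = 1)"
  by (induction s) (auto simp: mod_Suc)
lemma mod2_cases: "((s::nat) mod 2 = 0 \<and> (s+1) mod 2 = 1) \<or> (s mod 2 = 1 \<and> (s+1) mod 2 = 0)"
  by (induction s) (auto simp: mod_Suc)

lemma sum3: "(\<Sum>j<(3::nat). f j) = f 0 + f 1 + (f 2 :: nat)"
  by (simp add: numeral_3_eq_3 numeral_2_eq_2)

lemma cyc3_sum: "(\<Sum>j<3. ((s::nat) + j) mod 3 + 1) = (6::nat)"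
proof -
  have "(\<Sum>j<3. (s + j) mod 3 + 1) = (s mod 3 + 1) + ((s + 1) mod 3 + 1) + ((s + 2) mod 3 + 1)"
    by (simp only: sum3 add_0_right)
  also have "\<dots> = 6" using mod3_cases[of s] by (elim disjE) simp_all
  finally show ?thesis .
qed

lemma cyc3_cnt: "(\<Sum>j<3. if ((s::nat) + j) mod 3 + 1 = (a::nat) then 1 else 0) \<le> (1::nat)"
proof -
  have "(\<Sum>j<3. if (s + j) mod 3 + 1 = a then 1 else (0::nat)) =
     (if s mod 3 + 1 = a then 1 else 0) + (if (s + 1) mod 3 + 1 = a then 1 else 0) + (if (s + 2) mod 3 + 1 = a then 1 else 0)"
    by (simp only: sum3 add_0_right)
  then show ?thesis using mod3_cases[of s] by (elim disjE) auto
qed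

lemma cyc_per: "\<forall>j. ((s::nat) + (j + 3)) mod 3 = (s + j) mod (3::nat)"
  by (simp add: add.assoc[symmetric])

lemma cyc_bounds:
  "2 * (L::nat) \<le> (\<Sum>j<L. ((s::nat) + j) mod 3 + 1) + 1 \<and> (\<Sum>j<L. (s + j) mod 3 + 1) \<le> 2 * L + (1::nat)"
proof -
  define q r where "q = L div 3" and "r = L mod 3"
  have L: "L = 3 * q + r" unfolding q_def r_def by simp
  have per: "\<forall>j. (s + (j + 3)) mod 3 + 1 = (s + j) mod 3 + (1::nat)" using cyc_per by simp
  have S: "(\<Sum>j<L. (s + j) mod 3 + 1) = q * 6 + (\<Sum>j<r. (s + j) mod 3 + 1)"
    unfolding L using sum_periodic[OF per, of q r] cyc3_sum by simp
  have "r < 3" unfolding r_def by simp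
  then have "r = 0 \<or> r = 1 \<or> r = 2" by auto
  then show ?thesis
  proof (elim disjE)
    assume "r = 0" then show ?thesis using S L by simp
  next
    assume r: "r = 1"
    have "s mod 3 < 3" by simp
    then show ?thesis using S L r by simp
  next
    assume r: "r = 2"
    have P: "(\<Sum>j<r. (s + j) mod 3 + 1) = s mod 3 + 1 + ((s + 1) mod 3 + 1)"
      using r by (simp add: numeral_2_eq_2)
    have "3 \<le> s mod 3 + 1 + ((s + 1) mod 3 + 1) \<and> s mod 3 + 1 + ((s + 1) mod 3 + 1) \<le> 5"
      using mod3_cases[of s] by (elim disjE) auto
    then show ?thesis using S L r P by simp
  qed
qed

lemma cyc_cnt:
  assumes "L \<ge> 2"
  shows "2 * card {j. j < L \<and> ((s::nat) + j) mod 3 + 1 = (a::nat)} \<le> (L::nat)"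
proof -
  define q r where "q = L div 3" and "r = L mod 3"
  have L: "L = 3 * q + r" unfolding q_def r_def by simp
  define g where "g j = (if (s + j) mod 3 + 1 = a then 1 else (0::nat))" for j
  have per: "\<forall>j. g (j + 3) = g j" unfolding g_def using cyc_per by simp
  have S: "card {j. j < L \<and> (s + j) mod 3 + 1 = a} = q * (\<Sum>j<3. g j) + (\<Sum>j<r. g j)"
    unfolding card_sum L using sum_periodic[OF per, of q r] by (simp add: g_def)
  have c3: "(\<Sum>j<3. g j) \<le> 1" unfolding g_def by (rule cyc3_cnt)
  have qq: "q * (\<Sum>j<3. g j) \<le> q" using c3 by simp
  have cq: "card {j. j < L \<and> (s + j) mod 3 + 1 = a} \<le> q + (\<Sum>j<r. g j)" using S qq by linarith
  have "r < 3" unfolding r_def by simp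
  then have "r = 0 \<or> r = 1 \<or> r = 2" by auto
  then show ?thesis
  proof (elim disjE)
    assume r: "r = 0"
    have "card {j. j < L \<and> (s + j) mod 3 + 1 = a} \<le> q" using S qq r by simp
    then show ?thesis using L r by linarith
  next
    assume r: "r = 1"
    have "(\<Sum>j<r. g j) \<le> 1" using r by (simp add: g_def)
    moreover have "q \<ge> 1" using assms L r by simp
    ultimately show ?thesis using cq L r by linarith
  next
    assume r: "r = 2"
    have "(\<Sum>j<r. g j) = g 0 + g 1" using r by (simp add: numeral_2_eq_2)
    moreover have "g 0 + g 1 \<le> 1" unfolding g_def using mod3_cases[of s] by (elim disjE) auto
    ultimately show ?thesis using cq L r by linarith
  qed
qed





lemma cyc_good:
  assumes "n \<ge> 2" "m \<ge> 2" "n + 2 \<le> m \<or> m + 2 \<le> n"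
  shows "good 3 n m (\<lambda>i j. (i + j) mod 3 + 1)"
proof -
  have rs: "2 * m \<le> (\<Sum>j<m. (i + j) mod 3 + 1) + 1 \<and> (\<Sum>j<m. (i + j) mod 3 + 1) \<le> 2 * m + 1" for i
    by (rule cyc_bounds)
  have cs: "2 * n \<le> (\<Sum>i<n. (i + j) mod 3 + 1) + 1 \<and> (\<Sum>i<n. (i + j) mod 3 + 1) \<le> 2 * n + 1" for j
    using cyc_bounds[of n j] by (simp add: add.commute)
  have cc: "2 * card {i. i < n \<and> (i + j) mod 3 + 1 = a} \<le> n" for j a
    using cyc_cnt[OF assms(1), of j a] by (simp add: add.commute)
  show ?thesis unfolding good_def
  proof (intro conjI allI impI)
    fix i j assume "i < n" "j < m"
    show "1 \<le> (i + j) mod 3 + 1" by simp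
    show "(i + j) mod 3 + 1 \<le> 3" by simp
    show "(\<Sum>j'<m. (i + j') mod 3 + 1) \<noteq> (\<Sum>i'<n. (i' + j) mod 3 + 1)"
      using rs[of i] cs[of j] assms(3) by linarith
  next
    fix i a assume "i < n"
    show "2 * card {j. j < m \<and> (i + j) mod 3 + 1 = a} \<le> m" by (rule cyc_cnt[OF assms(2)])
  next
    fix j a assume "j < m"
    show "2 * card {i. i < n \<and> (i + j) mod 3 + 1 = a} \<le> n" by (rule cc)
  qed
qed

lemma alt2_sum: "(\<Sum>j<(2::nat). f j) = f 0 + (f 1 :: nat)"
  by (simp add: numeral_2_eq_2)

lemma E1_good:
  assumes "n = 2 * a" "m = 2 * b" "n \<noteq> m"
  shows "good 2 n m (\<lambda>i j. (i + j) mod 2 + 1)"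
proof -
  have per: "\<forall>j. (s + (j + 2)) mod 2 + 1 = (s + j) mod 2 + (1::nat)" for s :: nat
    by (simp add: add.assoc[symmetric])
  have rsum: "(\<Sum>j<2 * q. (s + j) mod 2 + 1) = 3 * q" for s q :: nat
  proof -
    have "(\<Sum>j<2 * q + 0. (s + j) mod 2 + 1) = q * (\<Sum>j<2. (s + j) mod 2 + 1)"
      using sum_periodic[OF per[of s], of q 0] by simp
    also have "(\<Sum>j<2. (s + j) mod 2 + 1) = 3" using mod2_cases[of s] by (simp add: alt2_sum) (elim disjE; simp)
    finally show ?thesis by simp
  qed
  have rcnt: "2 * card {j. j < 2 * q \<and> (s + j) mod 2 + 1 = c} \<le> 2 * q" for s q c :: nat
  proof -
    define g where "g j = (if (s + j) mod 2 + 1 = c then 1 else (0::nat))" for j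
    have pg: "\<forall>j. g (j + 2) = g j" unfolding g_def by (simp add: add.assoc[symmetric])
    have "card {j. j < 2 * q \<and> (s + j) mod 2 + 1 = c} = (\<Sum>j<2 * q + 0. g j)"
      unfolding card_sum g_def by simp
    also have "\<dots> = q * (\<Sum>j<2. g j)" using sum_periodic[OF pg, of q 0] by simp
    finally have e: "card {j. j < 2 * q \<and> (s + j) mod 2 + 1 = c} = q * (\<Sum>j<2. g j)" .
    have "(\<Sum>j<2. g j) \<le> 1" unfolding alt2_sum g_def using mod2_cases[of s] by (elim disjE) auto
    then have "q * (\<Sum>j<2. g j) \<le> q" by simp
    then show ?thesis using e by simp
  qed
  show ?thesis unfolding good_def
  proof (intro conjI allI impI)
    fix i j assume "i < n" "j < m"
    show "1 \<le> (i + j) mod 2 + 1" by simp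
    show "(i + j) mod 2 + 1 \<le> 2" by simp
    have "(\<Sum>j'<m. (i + j') mod 2 + 1) = 3 * b" using rsum assms(2) by simp
    moreover have "(\<Sum>i'<n. (i' + j) mod 2 + 1) = 3 * a" using rsum[where s=j and q=a] assms(1) by (simp add: add.commute)
    ultimately show "(\<Sum>j'<m. (i + j') mod 2 + 1) \<noteq> (\<Sum>i'<n. (i' + j) mod 2 + 1)" using assms by simp
  next
    fix i c assume "i < n"
    show "2 * card {j. j < m \<and> (i + j) mod 2 + 1 = c} \<le> m" using rcnt assms(2) by simp
  next
    fix j c assume "j < m"
    show "2 * card {i. i < n \<and> (i + j) mod 2 + 1 = c} \<le> n" using rcnt[where s=j and q=a and c=c] assms(1) by (simp add: add.commute)
  qed
qed




definition Hm :: "nat \<Rightarrow> nat \<Rightarrow> nat" where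
  "Hm i j = (if j = 2 * (i div 2) then 2 else 2 * ((i + j) mod 2) + 1)"

lemma Hm_pair: "Hm (2 * t) j + Hm (2 * t + 1) j = 4"
proof -
  have "(2 * t + 1 + j) = (2 * t + j) + 1" by simp
  then show ?thesis unfolding Hm_def using mod2_cases[of "2 * t + j"] by auto
qed

lemma Hm_pair_cnt: "(if Hm (2 * t) j = a then 1 else 0) + (if Hm (2 * t + 1) j = a then 1 else 0) =
   (if j = 2 * t then 2 * (if a = 2 then 1 else 0) else (if a = 1 then 1 else 0) + (if a = 3 then 1 else (0::nat)))"
proof -
  have "(2 * t + 1 + j) = (2 * t + j) + 1" by simp
  then show ?thesis unfolding Hm_def using mod2_cases[of "2 * t + j"] by auto
qed

lemma H_good:
  assumes n: "n = 2 * h" and h2: "h \<ge> 2" and m: "m = 2 * q + 1" and hq: "h \<le> q + 1"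
  shows "good 3 n m Hm"
proof -
  have q1: "q \<ge> 1" using h2 hq by simp
  have rowsum: "(\<Sum>j<m. Hm i j) = 4 * q + 2" and rowcnt: "2 * card {j. j < m \<and> Hm i j = a} \<le> m"
    if i: "i < n" for i a
  proof -
    define x where "x = 2 * (i div 2)"
    define g where "g j = 2 * ((i + j) mod 2) + (1::nat)" for j
    have xm: "x < m" unfolding x_def using i n m hq by presburger
    have Hij: "Hm i j = (if j = x then 2 else g j)" for j unfolding Hm_def x_def g_def by simp
    have per: "\<forall>j. g (j + 2) = g j" unfolding g_def by (simp add: add.assoc[symmetric])
    have g2: "(\<Sum>j<2. g j) = 4" unfolding alt2_sum g_def using mod2_cases[of i] by (elim disjE) simp_all
    have gx: "g x = g 0" unfolding g_def x_def by simp
    have sg: "(\<Sum>j<m. g j) = q * 4 + g 0" unfolding m using sum_periodic[OF per, of q 1] g2 by simp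
    have "(\<Sum>j<m. if j = x then 2 else g j) + g x = (\<Sum>j<m. g j) + 2" by (rule sum_point[OF xm])
    then show "(\<Sum>j<m. Hm i j) = 4 * q + 2" unfolding Hij using sg gx by simp
    define G where "G j = (if g j = a then 1 else (0::nat))" for j
    have perG: "\<forall>j. G (j + 2) = G j" unfolding G_def using per by simp
    have K1: "(\<Sum>j<2. G j) \<le> 1" unfolding alt2_sum G_def g_def using mod2_cases[of i] by (elim disjE) auto
    have K2: "a = 2 \<Longrightarrow> (\<Sum>j<2. G j) = 0" unfolding alt2_sum G_def g_def using mod2_cases[of i] by (elim disjE) auto
    have sG: "(\<Sum>j<m. G j) = q * (\<Sum>j<2. G j) + G 0" unfolding m using sum_periodic[OF perG, of q 1] by simp
    have "card {j. j < m \<and> Hm i j = a} = (\<Sum>j<m. if j = x then (if a = 2 then 1 else 0) else G j)"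
      unfolding card_sum Hij G_def by (rule sum.cong) auto
    moreover have "(\<Sum>j<m. if j = x then (if a = 2 then 1 else 0) else G j) + G x = (\<Sum>j<m. G j) + (if a = 2 then 1 else 0)"
      by (rule sum_point[OF xm])
    moreover have "G x = G 0" unfolding G_def using gx by simp
    ultimately have ce: "card {j. j < m \<and> Hm i j = a} = q * (\<Sum>j<2. G j) + (if a = 2 then 1 else 0)"
      using sG by simp
    show "2 * card {j. j < m \<and> Hm i j = a} \<le> m"
    proof (cases "a = 2")
      case True then show ?thesis using ce K2 q1 m by simp
    next
      case False
      have "q * (\<Sum>j<2. G j) \<le> q" using K1 by simp
      then have "card {j. j < m \<and> Hm i j = a} \<le> q" using ce False by simp
      then show ?thesis using m by linarith
    qed
  qed
  have colsum: "(\<Sum>i<n. Hm i j) = 4 * h" for j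
    unfolding n pair_sum using Hm_pair by simp
  have colcnt: "2 * card {i. i < n \<and> Hm i j = a} \<le> n" for j a
  proof -
    define C where "C = (if a = 1 then 1 else 0) + (if a = 3 then 1 else (0::nat))"
    define D where "D = 2 * (if a = 2 then 1 else (0::nat))"
    have "card {i. i < n \<and> Hm i j = a} = (\<Sum>t<h. if j = 2 * t then D else C)"
      unfolding card_sum n pair_sum Hm_pair_cnt C_def D_def by simp
    also have "\<dots> \<le> h"
    proof (cases "even j \<and> j div 2 < h")
      case True
      have "(\<Sum>t<h. if j = 2 * t then D else C) = (\<Sum>t<h. if t = j div 2 then D else C)"
        by (rule sum.cong) (use True in auto)
      also have "\<dots> = (h - 1) * C + D" using sum_pt True by simp
      also have "\<dots> \<le> h" unfolding C_def D_def using h2 by auto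
      finally show ?thesis .
    next
      case False
      have "(\<Sum>t<h. if j = 2 * t then D else C) = (\<Sum>t<h. C)"
        by (rule sum.cong) (use False in auto)
      also have "\<dots> \<le> h" unfolding C_def by auto
      finally show ?thesis .
    qed
    finally show ?thesis using n by simp
  qed
  show ?thesis unfolding good_def
  proof (intro conjI allI impI)
    fix i j assume "i < n" "j < m"
    show "1 \<le> Hm i j" unfolding Hm_def by simp
    show "Hm i j \<le> 3" unfolding Hm_def using mod2_cases[of "i + j"] by auto
    show "(\<Sum>j'<m. Hm i j') \<noteq> (\<Sum>i'<n. Hm i' j)" using rowsum[OF \<open>i < n\<close>] colsum[of j] by presburger
  next
    fix i a assume "i < n" then show "2 * card {j. j < m \<and> Hm i j = a} \<le> m" by (rule rowcnt)
  next
    fix j a assume "j < m" show "2 * card {i. i < n \<and> Hm i j = a} \<le> n" by (rule colcnt)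
  qed
qed




definition ind :: "bool \<Rightarrow> nat" where "ind b = (if b then 1 else 0)"

lemma pt_sum: assumes "x < p" "\<forall>j<p. f j = (if j = x then d else c)"
  shows "(\<Sum>j<p. f j) = (p - 1) * c + (d::nat)"
proof -
  have "(\<Sum>j<p. f j) = (\<Sum>j<p. if j = x then d else c)" by (rule sum.cong) (use assms in auto)
  then show ?thesis using sum_pt[OF assms(1)] by simp
qed

lemma pt_cnt: assumes "x < p" "\<forall>j<p. f j = (if j = x then d else c)"
  shows "(\<Sum>j<p. if f j = (a::nat) then 1 else 0) = (p - 1) * ind (c = a) + ind (d = a)"
proof -
  have "(\<Sum>j<p. if f j = a then 1 else 0) = (\<Sum>j<p. if j = x then ind (d = a) else ind (c = a))"
    by (rule sum.cong) (use assms in \<open>auto simp: ind_def\<close>)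
  then show ?thesis using sum_pt[OF assms(1)] by simp
qed

lemma line2_pt:
  assumes "x1 < p" "x2 < p" "\<forall>j<p. f j = (if j = x1 then d1 else c1)" "\<forall>j<p. f (p + j) = (if j = x2 then d2 else c2)"
  shows "(\<Sum>j<2 * p. f j) = (p - 1) * c1 + d1 + ((p - 1) * c2 + (d2::nat))"
    and "card {j. j < 2 * p \<and> f j = a} = (p - 1) * ind (c1 = a) + ind (d1 = a) + ((p - 1) * ind (c2 = a) + ind (d2 = a))"
proof -
  show "(\<Sum>j<2 * p. f j) = (p - 1) * c1 + d1 + ((p - 1) * c2 + (d2::nat))"
    unfolding line2 using pt_sum[OF assms(1,3)] pt_sum[OF assms(2), of "\<lambda>j. f (p + j)"] assms(4) by simp
  show "card {j. j < 2 * p \<and> f j = a} = (p - 1) * ind (c1 = a) + ind (d1 = a) + ((p - 1) * ind (c2 = a) + ind (d2 = a))"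
    unfolding card_sum line2 using pt_cnt[OF assms(1,3)] pt_cnt[OF assms(2), of "\<lambda>j. f (p + j)"] assms(4) by simp
qed

lemma line3_pt:
  assumes "x1 < p" "x2 < p" "\<forall>j<p. f j = (if j = x1 then d1 else c1)" "\<forall>j<p. f (Suc p + j) = (if j = x2 then d2 else c2)"
  shows "(\<Sum>j<2 * p + 1. f j) = (p - 1) * c1 + d1 + f p + ((p - 1) * c2 + (d2::nat))"
    and "card {j. j < 2 * p + 1 \<and> f j = a} = (p - 1) * ind (c1 = a) + ind (d1 = a) + ind (f p = a) + ((p - 1) * ind (c2 = a) + ind (d2 = a))"
proof -
  show "(\<Sum>j<2 * p + 1. f j) = (p - 1) * c1 + d1 + f p + ((p - 1) * c2 + (d2::nat))"
    unfolding line3 using pt_sum[OF assms(1,3)] pt_sum[OF assms(2), of "\<lambda>j. f (Suc p + j)"] assms(4) by simp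
  show "card {j. j < 2 * p + 1 \<and> f j = a} = (p - 1) * ind (c1 = a) + ind (d1 = a) + ind (f p = a) + ((p - 1) * ind (c2 = a) + ind (d2 = a))"
    unfolding card_sum line3 using pt_cnt[OF assms(1,3)] pt_cnt[OF assms(2), of "\<lambda>j. f (Suc p + j)"] assms(4)
    by (simp add: ind_def)
qed

definition E3m :: "nat \<Rightarrow> nat \<Rightarrow> nat \<Rightarrow> nat" where
  "E3m p i j = (if i < p then (if j < p then 3 else if j - p = i then 2 else 1)
                else (if j < p then 1 else if j = i then 2 else 3))"

lemma E3_good:
  assumes p2: "p \<ge> 2" and n: "n = 2 * p"
  shows "good 3 n n (E3m p)"
proof -
  have p0: "0 < p" using p2 by simp
  have rowT: "(\<Sum>j<n. E3m p i j) = 4 * p + 1 \<and> 2 * card {j. j < n \<and> E3m p i j = a} \<le> n" if "i < p" for i a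
  proof -
    have A: "\<forall>j<p. E3m p i j = (if j = 0 then 3 else 3)" using that by (simp add: E3m_def)
    have B: "\<forall>j<p. E3m p i (p + j) = (if j = i then 2 else 1)" using that by (auto simp: E3m_def)
    note L = line2_pt[OF p0 that A B]
    show ?thesis unfolding n L using p2 by (auto simp: ind_def)
  qed
  have rowB: "(\<Sum>j<n. E3m p i j) = 4 * p - 1 \<and> 2 * card {j. j < n \<and> E3m p i j = a} \<le> n" if "p \<le> i" "i < 2 * p" for i a
  proof -
    have x: "i - p < p" using that by simp
    have A: "\<forall>j<p. E3m p i j = (if j = 0 then 1 else 1)" using that by (simp add: E3m_def)
    have B: "\<forall>j<p. E3m p i (p + j) = (if j = i - p then 2 else 3)" using that by (auto simp: E3m_def)
    note L = line2_pt[OF p0 x A B]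
    show ?thesis unfolding n L using p2 by (auto simp: ind_def)
  qed
  have colL: "(\<Sum>i<n. E3m p i j) = 4 * p \<and> 2 * card {i. i < n \<and> E3m p i j = a} \<le> n" if "j < p" for j a
  proof -
    have A: "\<forall>i<p. E3m p i j = (if i = 0 then 3 else 3)" using that by (simp add: E3m_def)
    have B: "\<forall>i<p. E3m p (p + i) j = (if i = 0 then 1 else 1)" using that by (simp add: E3m_def)
    note L = line2_pt[OF p0 p0 A B]
    show ?thesis unfolding n L using p2 by (auto simp: ind_def)
  qed
  have colR: "(\<Sum>i<n. E3m p i j) = 4 * p \<and> 2 * card {i. i < n \<and> E3m p i j = a} \<le> n" if "p \<le> j" "j < 2 * p" for j a
  proof -
    have x: "j - p < p" using that by simp
    have A: "\<forall>i<p. E3m p i j = (if i = j - p then 2 else 1)" using that by (auto simp: E3m_def)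
    have B: "\<forall>i<p. E3m p (p + i) j = (if i = j - p then 2 else 3)" using that by (auto simp: E3m_def)
    note L = line2_pt[OF x x A B]
    show ?thesis unfolding n L using p2 by (auto simp: ind_def)
  qed
  have row: "(\<Sum>j<n. E3m p i j) = 4 * p + 1 \<or> (\<Sum>j<n. E3m p i j) = 4 * p - 1" if "i < n" for i
    using rowT rowB that n by (cases "i < p") auto
  have col: "(\<Sum>i<n. E3m p i j) = 4 * p" if "j < n" for j
    using colL colR that n by (cases "j < p") auto
  show ?thesis unfolding good_def
  proof (intro conjI allI impI)
    fix i j assume "i < n" "j < n"
    show "1 \<le> E3m p i j" "E3m p i j \<le> 3" unfolding E3m_def by auto
    show "(\<Sum>j'<n. E3m p i j') \<noteq> (\<Sum>i'<n. E3m p i' j)" using row[OF \<open>i < n\<close>] col[OF \<open>j < n\<close>] p2 by auto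
  next
    fix i a assume "i < n" then show "2 * card {j. j < n \<and> E3m p i j = a} \<le> n"
      using rowT rowB n by (cases "i < p") auto
  next
    fix j a assume "j < n" then show "2 * card {i. i < n \<and> E3m p i j = a} \<le> n"
      using colL colR n by (cases "j < p") auto
  qed
qed




definition O4m :: "nat \<Rightarrow> nat \<Rightarrow> nat \<Rightarrow> nat" where
  "O4m p i j = (if i < p then (if j < p then 1 else if j = p then 3 else if j - Suc p = i then 3 else 2)
     else if i = p then (if j < p then 2 else if j = p then 1 else 3)
     else (if j < p then (if j = i - Suc p then 3 else 2) else if j = p then (if i = Suc p then 1 else 2)
           else if j = i then 3 else 1))"

lemma O4_good:
  assumes p3: "p \<ge> 3" and n: "n = 2 * p + 1"
  shows "good 3 n n (O4m p)"
proof -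
  have p0: "0 < p" using p3 by simp
  have rowT: "(\<Sum>j<n. O4m p i j) = 3 * p + 4 \<and> 2 * card {j. j < n \<and> O4m p i j = a} \<le> n" if "i < p" for i a
  proof -
    have A: "\<forall>j<p. O4m p i j = (if j = 0 then 1 else 1)" using that by (simp add: O4m_def)
    have B: "\<forall>j<p. O4m p i (Suc p + j) = (if j = i then 3 else 2)" using that by (auto simp: O4m_def)
    have M: "O4m p i p = 3" using that by (simp add: O4m_def)
    note L = line3_pt[OF p0 that A B]
    show ?thesis unfolding n L M using p3 by (auto simp: ind_def)
  qed
  have rowM: "(\<Sum>j<n. O4m p p j) = 5 * p + 1 \<and> 2 * card {j. j < n \<and> O4m p p j = a} \<le> n" for a
  proof -
    have A: "\<forall>j<p. O4m p p j = (if j = 0 then 2 else 2)" by (simp add: O4m_def)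
    have B: "\<forall>j<p. O4m p p (Suc p + j) = (if j = 0 then 3 else 3)" by (auto simp: O4m_def)
    have M: "O4m p p p = 1" by (simp add: O4m_def)
    note L = line3_pt[OF p0 p0 A B]
    show ?thesis unfolding n L M using p3 by (auto simp: ind_def)
  qed
  have rowB: "(\<Sum>j<n. O4m p i j) = (if i = Suc p then 3 * p + 4 else 3 * p + 5) \<and> 2 * card {j. j < n \<and> O4m p i j = a} \<le> n"
    if "Suc p \<le> i" "i < 2 * p + 1" for i a
  proof -
    have x: "i - Suc p < p" using that by simp
    have A: "\<forall>j<p. O4m p i j = (if j = i - Suc p then 3 else 2)" using that by (auto simp: O4m_def)
    have B: "\<forall>j<p. O4m p i (Suc p + j) = (if j = i - Suc p then 3 else 1)" using that by (auto simp: O4m_def)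
    have M: "O4m p i p = (if i = Suc p then 1 else 2)" using that by (simp add: O4m_def)
    note L = line3_pt[OF x x A B]
    show ?thesis unfolding n L M using p3 by (auto simp: ind_def)
  qed
  have colL: "(\<Sum>i<n. O4m p i j) = 3 * p + 3 \<and> 2 * card {i. i < n \<and> O4m p i j = a} \<le> n" if "j < p" for j a
  proof -
    have A: "\<forall>i<p. O4m p i j = (if i = 0 then 1 else 1)" using that by (simp add: O4m_def)
    have B: "\<forall>i<p. O4m p (Suc p + i) j = (if i = j then 3 else 2)" using that by (auto simp: O4m_def)
    have M: "O4m p p j = 2" using that by (simp add: O4m_def)
    note L = line3_pt[OF p0 that A B]
    show ?thesis unfolding n L M using p3 by (auto simp: ind_def)
  qed
  have colM: "(\<Sum>i<n. O4m p i p) = 5 * p \<and> 2 * card {i. i < n \<and> O4m p i p = a} \<le> n" for a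
  proof -
    have A: "\<forall>i<p. O4m p i p = (if i = 0 then 3 else 3)" by (simp add: O4m_def)
    have B: "\<forall>i<p. O4m p (Suc p + i) p = (if i = 0 then 1 else 2)" by (auto simp: O4m_def)
    have M: "O4m p p p = 1" by (simp add: O4m_def)
    note L = line3_pt[OF p0 p0 A B]
    show ?thesis unfolding n L M using p3 by (auto simp: ind_def)
  qed
  have colR: "(\<Sum>i<n. O4m p i j) = 3 * p + 6 \<and> 2 * card {i. i < n \<and> O4m p i j = a} \<le> n"
    if "Suc p \<le> j" "j < 2 * p + 1" for j a
  proof -
    have x: "j - Suc p < p" using that by simp
    have A: "\<forall>i<p. O4m p i j = (if i = j - Suc p then 3 else 2)" using that by (auto simp: O4m_def)
    have B: "\<forall>i<p. O4m p (Suc p + i) j = (if i = j - Suc p then 3 else 1)" using that by (auto simp: O4m_def)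
    have M: "O4m p p j = 3" using that by (simp add: O4m_def)
    note L = line3_pt[OF x x A B]
    show ?thesis unfolding n L M using p3 by (auto simp: ind_def)
  qed
  have rowcases: "i < p \<or> i = p \<or> (Suc p \<le> i \<and> i < 2 * p + 1)" if "i < n" for i using that n by auto
  have row: "(\<Sum>j<n. O4m p i j) \<in> {3 * p + 4, 5 * p + 1, 3 * p + 5}" if "i < n" for i
    using rowcases[OF that] rowT rowM rowB by auto
  have col: "(\<Sum>i<n. O4m p i j) \<in> {3 * p + 3, 5 * p, 3 * p + 6}" if "j < n" for j
    using rowcases[OF that] colL colM colR by auto
  show ?thesis unfolding good_def
  proof (intro conjI allI impI)
    fix i j assume "i < n" "j < n"
    show "1 \<le> O4m p i j" "O4m p i j \<le> 3" unfolding O4m_def by auto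
    show "(\<Sum>j'<n. O4m p i j') \<noteq> (\<Sum>i'<n. O4m p i' j)" using row[OF \<open>i < n\<close>] col[OF \<open>j < n\<close>] p3 by auto presburger+
  next
    fix i a assume "i < n" then show "2 * card {j. j < n \<and> O4m p i j = a} \<le> n"
      using rowcases rowT rowM rowB by blast
  next
    fix j a assume "j < n" then show "2 * card {i. i < n \<and> O4m p i j = a} \<le> n"
      using rowcases colL colM colR by blast
  qed
qed




definition chk :: "nat \<Rightarrow> nat \<Rightarrow> nat \<Rightarrow> (nat \<Rightarrow> nat \<Rightarrow> nat) \<Rightarrow> bool" where
  "chk k n m M \<longleftrightarrow> (\<forall>i\<in>set [0..<n]. \<forall>j\<in>set [0..<m]. 1 \<le> M i j \<and> M i j \<le> k)
    \<and> (\<forall>i\<in>set [0..<n]. \<forall>a\<in>set [1..<k+1]. 2 * length (filter (\<lambda>j. M i j = a) [0..<m]) \<le> m)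
    \<and> (\<forall>j\<in>set [0..<m]. \<forall>a\<in>set [1..<k+1]. 2 * length (filter (\<lambda>i. M i j = a) [0..<n]) \<le> n)
    \<and> (\<forall>i\<in>set [0..<n]. \<forall>j\<in>set [0..<m]. sum_list (map (M i) [0..<m]) \<noteq> sum_list (map (\<lambda>i. M i j) [0..<n]))"

lemma len_filter_upt: "length (filter P [0..<m]) = card {j. j < m \<and> P j}"
  unfolding length_filter_conv_card by (rule arg_cong[where f=card]) auto

lemma sum_list_upt: "sum_list (map f [0..<m]) = (\<Sum>j<m. (f j :: nat))"
  by (simp add: sum_list_distinct_conv_sum_set atLeast0LessThan)

lemma chk_good: assumes "chk k n m M" shows "good k n m M"
proof -
  have e: "\<forall>i<n. \<forall>j<m. 1 \<le> M i j \<and> M i j \<le> k" using assms unfolding chk_def by auto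
  have r: "2 * card {j. j < m \<and> M i j = a} \<le> m" if "i < n" for i a
  proof (cases "a \<in> {1..k}")
    case True
    have A: "\<forall>i\<in>set [0..<n]. \<forall>a\<in>set [1..<k+1]. 2 * length (filter (\<lambda>j. M i j = a) [0..<m]) \<le> m"
      using assms unfolding chk_def by blast
    have "a \<in> set [1..<k+1]" "i \<in> set [0..<n]" using True that by auto
    then show ?thesis using A unfolding len_filter_upt by blast
  next
    case False
    then have E: "{j. j < m \<and> M i j = a} = {}" using e that by auto
    show ?thesis unfolding E by simp
  qed
  have c: "2 * card {i. i < n \<and> M i j = a} \<le> n" if "j < m" for j a
  proof (cases "a \<in> {1..k}")
    case True
    have A: "\<forall>j\<in>set [0..<m]. \<forall>a\<in>set [1..<k+1]. 2 * length (filter (\<lambda>i. M i j = a) [0..<n]) \<le> n"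
      using assms unfolding chk_def by blast
    have "a \<in> set [1..<k+1]" "j \<in> set [0..<m]" using True that by auto
    then show ?thesis using A unfolding len_filter_upt by blast
  next
    case False
    then have E: "{i. i < n \<and> M i j = a} = {}" using e that by auto
    show ?thesis unfolding E by simp
  qed
  have s: "\<forall>i<n. \<forall>j<m. (\<Sum>j'<m. M i j') \<noteq> (\<Sum>i'<n. M i' j)"
    using assms unfolding chk_def sum_list_upt by auto
  show ?thesis unfolding good_def using e r c s by blast
qed

lemma ex22: "good 4 2 2 (\<lambda>i j. [[1,2],[3,4::nat]] ! i ! j)"
  by (rule chk_good) code_simp
lemma ex23: "good 3 2 3 (\<lambda>i j. [[1,2,3],[2,3,1::nat]] ! i ! j)"
  by (rule chk_good) code_simp
lemma ex33: "good 5 3 3 (\<lambda>i j. [[1,2,3],[2,3,5],[5,4,1::nat]] ! i ! j)"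
  by (rule chk_good) code_simp
lemma ex55: "good 4 5 5 (\<lambda>i j. [[3, 1, 2, 4, 4], [4, 4, 3, 2, 1], [3, 1, 4, 3, 4], [4, 3, 2, 3, 2], [2, 3, 1, 4, 1::nat]] ! i ! j)"
  by (rule chk_good) code_simp




lemma H_exists:
  assumes "even n" "n \<ge> 4" "m = n + 1 \<or> n = m + 1"
  shows "\<exists>M. good 3 n m M"
proof -
  obtain h where h: "n = 2 * h" using assms(1) by blast
  have m: "m = 2 * (m div 2) + 1" using assms h by presburger
  have "h \<ge> 2" "h \<le> m div 2 + 1" using assms h by presburger+
  then show ?thesis using H_good[OF h _ m] by blast
qed

lemma three_exists:
  assumes "n \<ge> 2" "m \<ge> 2" "odd n \<or> odd m" "\<not> (n = 3 \<and> m = 3)" "\<not> (n = 5 \<and> m = 5)"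
  shows "\<exists>M. good 3 n m M"
proof -
  consider (eq) "n = m" | (far) "n + 2 \<le> m \<or> m + 2 \<le> n" | (near) "m = n + 1 \<or> n = m + 1" by linarith
  then show ?thesis
  proof cases
    case eq
    then have "odd n" "n \<ge> 7" using assms by presburger+
    then have p: "n = 2 * (n div 2) + 1" "n div 2 \<ge> 3" by presburger+
    then show ?thesis using O4_good[OF p(2,1)] eq by metis
  next
    case far then show ?thesis using cyc_good[OF assms(1,2)] by blast
  next
    case near
    show ?thesis
    proof (cases "even n")
      case True
      show ?thesis
      proof (cases "n \<ge> 4")
        case True2: True
        then show ?thesis using H_exists[OF True True2 near] by blast
      next
        case False
        then have "n = 2" "m = 3" using True assms near by presburger+
        then show ?thesis using ex23 by blast
      qed
    next
      case False
      then have em: "even m" using near by presburger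
      have near': "n = m + 1 \<or> m = n + 1" using near by blast
      show ?thesis
      proof (cases "m \<ge> 4")
        case True
        obtain M where "good 3 m n M" using H_exists[OF em True near'] by blast
        then show ?thesis using good_transp by blast
      next
        case False
        then have "m = 2" "n = 3" using em assms near by presburger+
        then show ?thesis using good_transp[OF ex23] by blast
      qed
    qed
  qed
qed

theorem mainTheorem9:
  fixes n m :: nat
  assumes "n > 0" and "m > 0"
  shows "(even n \<and> even m \<longrightarrow>
            (n = 2 \<and> m = 2 \<longrightarrow> chi_mSigma (Knm_V n m) Knm_E = 4) \<and>
            (n = m \<and> n \<ge> 4 \<longrightarrow> chi_mSigma (Knm_V n m) Knm_E = 3) \<and>
            (n \<noteq> m \<longrightarrow> chi_mSigma (Knm_V n m) Knm_E = 2)) \<and>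
         ((odd n \<or> odd m) \<and> n \<ge> 2 \<and> m \<ge> 2 \<longrightarrow>
            (n = 3 \<and> m = 3 \<longrightarrow> chi_mSigma (Knm_V n m) Knm_E = 5) \<and>
            (n = 5 \<and> m = 5 \<longrightarrow> chi_mSigma (Knm_V n m) Knm_E = 4) \<and>
            (\<not> (n = 3 \<and> m = 3) \<and> \<not> (n = 5 \<and> m = 5) \<longrightarrow> chi_mSigma (Knm_V n m) Knm_E = 3))"
proof (intro conjI impI)
  assume ev: "even n \<and> even m"
  {
    assume nm: "n = 2 \<and> m = 2"
    have ex: "\<exists>M. good 4 n m M" using ex22 nm by blast
    have no: "\<not> good (4 - 1) n m M" for M
      using defic[of 3 2 M 1] nm by auto
    show "chi_mSigma (Knm_V n m) Knm_E = 4" by (rule chi_eq[OF ex no]) simp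
  }
  {
    assume nm: "n = m \<and> n \<ge> 4"
    obtain p where p: "n = 2 * p" using ev by blast
    have "p \<ge> 2" using p nm by simp
    then have ex: "\<exists>M. good 3 n m M" using E3_good[OF _ p] nm by blast
    have no: "\<not> good (3 - 1) n m M" for M
      using no_good2_eq[of 2 n M] nm assms by auto
    show "chi_mSigma (Knm_V n m) Knm_E = 3" by (rule chi_eq[OF ex no]) simp
  }
  {
    assume nm: "n \<noteq> m"
    obtain a where a: "n = 2 * a" using ev by blast
    obtain b where b: "m = 2 * b" using ev by blast
    have ex: "\<exists>M. good 2 n m M" using E1_good[OF a b nm] by blast
    have no: "\<not> good (2 - 1) n m M" for M
      using no_good1[of n m M] assms by auto
    show "chi_mSigma (Knm_V n m) Knm_E = 2" by (rule chi_eq[OF ex no]) simp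
  }
next
  assume od: "(odd n \<or> odd m) \<and> n \<ge> 2 \<and> m \<ge> 2"
  {
    assume nm: "n = 3 \<and> m = 3"
    have ex: "\<exists>M. good 5 n m M" using ex33 nm by blast
    have no: "\<not> good (5 - 1) n m M" for M
      using defic[of 4 3 M 1] nm by auto
    show "chi_mSigma (Knm_V n m) Knm_E = 5" by (rule chi_eq[OF ex no]) simp
  }
  {
    assume nm: "n = 5 \<and> m = 5"
    have ex: "\<exists>M. good 4 n m M" using ex55 nm by blast
    have no: "\<not> good (4 - 1) n m M" for M
      using defic[of 3 5 M 2] nm by auto
    show "chi_mSigma (Knm_V n m) Knm_E = 4" by (rule chi_eq[OF ex no]) simp
  }
  {
    assume nm: "\<not> (n = 3 \<and> m = 3) \<and> \<not> (n = 5 \<and> m = 5)"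
    have ex: "\<exists>M. good 3 n m M" using three_exists od nm by blast
    have no: "\<not> good (3 - 1) n m M" for M
      using no_good2_odd[of 2 n m M] od by auto
    show "chi_mSigma (Knm_V n m) Knm_E = 3" by (rule chi_eq[OF ex no]) simp
  }
qed


end
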